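(* Let $(X,\le)$ be a poset and $E$ an equivalence relation on $X$ with ${\le}\subseteq E$. Let $\alpha:X\to X$ be an order automorphism of $(X,\le)$ and $\beta:X\to X$ a self-inverse dual order automorphism of $(X,\le)$ such that $\alpha,\beta\subseteq E$ and $\beta=\alpha\circ\beta\circ\alpha$. Then for all $n\in\omega$: (i) $\alpha^n\circ\beta$ and $\beta\circ\alpha^n$ are dual order automorphisms of $(X,\le)$; (ii) $\alpha^n\circ\beta\subseteq E$ and $\beta\circ\alpha^n\subseteq E$; (iii) $\alpha^n\circ\beta$ and $\beta\circ\alpha^n$ are self-inverse; (iv) $\alpha\circ(\alpha^n\circ\beta)\circ\alpha=\alpha^n\circ\beta$ and $\alpha\circ(\beta\circ\alpha^n)\circ\alpha=\beta\circ\alpha^n$.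
   Context: Functions $X\to X$ are identified with their graphs $\{(x,\gamma(x))\}$ and composed as relations: $R\circ S=\{(x,y)\mid\exists z\,((x,z)\in R,(z,y)\in S)\}$; $\alpha^0=\mathrm{id}_X$, $\alpha^{k+1}=\alpha^k\circ\alpha$. Order automorphism: bijection with $x\le y\iff\alpha(x)\le\alpha(y)$; dual order automorphism: bijection with $x\le y\iff\beta(y)\le\beta(x)$; self-inverse: $\gamma\circ\gamma=\mathrm{id}_X$. *)

theory Defs
  imports Main
begin

text \<open>Functions are identified with their graphs; relations are composed
  with \<open>O\<close> (diagrammatic: \<open>R O S = {(x,y). \<exists>z. (x,z)\<in>R \<and> (z,y)\<in>S}\<close>),
  and powers are \<open>R ^^ n\<close> with \<open>R ^^ 0 = Id\<close>, \<open>R ^^ Suc n = R ^^ n O R\<close>.\<close>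

definition graph :: "('a \<Rightarrow> 'a) \<Rightarrow> 'a rel" where
  "graph f = {(x, f x) | x. True}"

definition order_automorphism :: "('a::order \<Rightarrow> 'a) \<Rightarrow> bool" where
  "order_automorphism f \<longleftrightarrow> bij f \<and> (\<forall>x y. x \<le> y \<longleftrightarrow> f x \<le> f y)"

definition dual_order_automorphism :: "('a::order \<Rightarrow> 'a) \<Rightarrow> bool" where
  "dual_order_automorphism f \<longleftrightarrow> bij f \<and> (\<forall>x y. x \<le> y \<longleftrightarrow> f y \<le> f x)"

definition self_inverse :: "('a \<Rightarrow> 'a) \<Rightarrow> bool" where
  "self_inverse f \<longleftrightarrow> graph f O graph f = Id"

end

theory Submission
  imports Defs
begin

lemma graph_comp: "graph f O graph g = graph (g \<circ> f)"
  unfolding graph_def by auto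

lemma graph_pow: "graph f ^^ n = graph (f ^^ n)"
proof (induction n)
  case 0 show ?case by (auto simp: graph_def)
next
  case (Suc n) show ?case
    using Suc by (simp add: graph_comp funpow_swap1 o_def)
qed

lemma graph_eq: "graph f = graph g \<longleftrightarrow> f = g"
  unfolding graph_def by (auto simp: fun_eq_iff)

lemma graph_Id: "graph id = Id"
  unfolding graph_def by auto

lemma self_inv_iff: "self_inverse f \<longleftrightarrow> f \<circ> f = id"
  unfolding self_inverse_def by (metis graph_comp graph_eq graph_Id)

lemma dual_comp:
  assumes "dual_order_automorphism b" "order_automorphism a"
  shows "dual_order_automorphism (b \<circ> a)" "dual_order_automorphism (a \<circ> b)"
  using assms unfolding dual_order_automorphism_def order_automorphism_def
  by (auto intro: bij_comp)

lemma ord_pow: "order_automorphism a \<Longrightarrow> order_automorphism (a ^^ n)"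
proof (induction n)
  case 0 then show ?case by (simp add: order_automorphism_def bij_def inj_on_def surj_def)
next
  case (Suc n) then show ?case
    unfolding order_automorphism_def by (auto intro: bij_comp)
qed

lemma E_pow:
  assumes "equiv UNIV E" "graph a \<subseteq> E"
  shows "(x, (a ^^ n) x) \<in> E"
proof (induction n)
  case 0 then show ?case using assms(1) by (simp add: equiv_def refl_on_def)
next
  case (Suc n)
  have "((a ^^ n) x, a ((a ^^ n) x)) \<in> E" using assms(2) by (auto simp: graph_def)
  with Suc show ?case using assms(1) by (auto simp: equiv_def elim: transE)
qed

theorem lemma3p19:
  fixes E :: "('a::order) rel" and \<alpha> \<beta> :: "'a \<Rightarrow> 'a"
  assumes "equiv UNIV E"
    and "{(x, y). x \<le> y} \<subseteq> E"
    and "order_automorphism \<alpha>"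
    and "dual_order_automorphism \<beta>"
    and "self_inverse \<beta>"
    and "graph \<alpha> \<subseteq> E" and "graph \<beta> \<subseteq> E"
    and "graph \<beta> = graph \<alpha> O graph \<beta> O graph \<alpha>"
  shows "\<forall>n::nat.
      (\<exists>\<gamma>. graph \<gamma> = (graph \<alpha> ^^ n) O graph \<beta> \<and> dual_order_automorphism \<gamma>) \<and>
      (\<exists>\<gamma>. graph \<gamma> = graph \<beta> O (graph \<alpha> ^^ n) \<and> dual_order_automorphism \<gamma>) \<and>
      (graph \<alpha> ^^ n) O graph \<beta> \<subseteq> E \<and>
      graph \<beta> O (graph \<alpha> ^^ n) \<subseteq> E \<and>
      (\<exists>\<gamma>. graph \<gamma> = (graph \<alpha> ^^ n) O graph \<beta> \<and> self_inverse \<gamma>) \<and>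
      (\<exists>\<gamma>. graph \<gamma> = graph \<beta> O (graph \<alpha> ^^ n) \<and> self_inverse \<gamma>) \<and>
      graph \<alpha> O ((graph \<alpha> ^^ n) O graph \<beta>) O graph \<alpha> = (graph \<alpha> ^^ n) O graph \<beta> \<and>
      graph \<alpha> O (graph \<beta> O (graph \<alpha> ^^ n)) O graph \<alpha> = graph \<beta> O (graph \<alpha> ^^ n)"
proof
  fix n :: nat
  have key: "\<And>x. \<alpha> (\<beta> (\<alpha> x)) = \<beta> x"
  proof -
    have "graph \<beta> = graph (\<alpha> \<circ> \<beta> \<circ> \<alpha>)"
      using assms(8) by (simp only: graph_comp o_assoc)
    hence "\<beta> = \<alpha> \<circ> \<beta> \<circ> \<alpha>" by (simp only: graph_eq)
    thus "\<And>x. \<alpha> (\<beta> (\<alpha> x)) = \<beta> x" by (metis comp_apply)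
  qed
  have bb: "\<And>x. \<beta> (\<beta> x) = x"
    using assms(5) by (simp add: self_inv_iff fun_eq_iff)
  have sand: "\<And>x. (\<alpha> ^^ m) (\<beta> ((\<alpha> ^^ m) x)) = \<beta> x" for m
  proof (induction m)
    case 0 then show ?case by simp
  next
    case (Suc m)
    fix x
    have "(\<alpha> ^^ Suc m) (\<beta> ((\<alpha> ^^ Suc m) x)) = \<alpha> ((\<alpha> ^^ m) (\<beta> ((\<alpha> ^^ m) (\<alpha> x))))"
      by (metis comp_apply funpow.simps(2) funpow_Suc_right)
    also have "\<dots> = \<alpha> (\<beta> (\<alpha> x))" using Suc.IH by simp
    also have "\<dots> = \<beta> x" using key by simp
    finally show "(\<alpha> ^^ Suc m) (\<beta> ((\<alpha> ^^ Suc m) x)) = \<beta> x" .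
  qed
  have g1: "(graph \<alpha> ^^ n) O graph \<beta> = graph (\<beta> \<circ> \<alpha> ^^ n)"
    by (simp add: graph_pow graph_comp)
  have g2: "graph \<beta> O (graph \<alpha> ^^ n) = graph (\<alpha> ^^ n \<circ> \<beta>)"
    by (simp add: graph_pow graph_comp)
  have d1: "dual_order_automorphism (\<beta> \<circ> \<alpha> ^^ n)" "dual_order_automorphism (\<alpha> ^^ n \<circ> \<beta>)"
    using dual_comp[OF assms(4) ord_pow[OF assms(3)]] by auto
  have s1: "self_inverse (\<beta> \<circ> \<alpha> ^^ n)" "self_inverse (\<alpha> ^^ n \<circ> \<beta>)"
    unfolding self_inv_iff using sand bb by (auto simp: fun_eq_iff)
  have e1: "graph (\<beta> \<circ> \<alpha> ^^ n) \<subseteq> E"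
  proof
    fix p assume "p \<in> graph (\<beta> \<circ> \<alpha> ^^ n)"
    then obtain x where p: "p = (x, \<beta> ((\<alpha> ^^ n) x))" by (auto simp: graph_def)
    have "((\<alpha> ^^ n) x, \<beta> ((\<alpha> ^^ n) x)) \<in> E" using assms(7) by (auto simp: graph_def)
    with E_pow[OF assms(1) assms(6)] show "p \<in> E" unfolding p
      using assms(1) by (auto simp: equiv_def elim: transE)
  qed
  have e2: "graph (\<alpha> ^^ n \<circ> \<beta>) \<subseteq> E"
  proof
    fix p assume "p \<in> graph (\<alpha> ^^ n \<circ> \<beta>)"
    then obtain x where p: "p = (x, (\<alpha> ^^ n) (\<beta> x))" by (auto simp: graph_def)
    have "(x, \<beta> x) \<in> E" using assms(7) by (auto simp: graph_def)
    with E_pow[OF assms(1) assms(6), of "\<beta> x" n] show "p \<in> E" unfolding p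
      using assms(1) by (auto simp: equiv_def elim: transE)
  qed
  have i1: "\<alpha> (\<beta> ((\<alpha> ^^ n) (\<alpha> x))) = \<beta> ((\<alpha> ^^ n) x)" for x
    by (metis funpow_swap1 key)
  have i2: "\<alpha> ((\<alpha> ^^ n) (\<beta> (\<alpha> x))) = (\<alpha> ^^ n) (\<beta> x)" for x
    by (metis funpow_swap1 key)
  show "(\<exists>\<gamma>. graph \<gamma> = (graph \<alpha> ^^ n) O graph \<beta> \<and> dual_order_automorphism \<gamma>) \<and>
      (\<exists>\<gamma>. graph \<gamma> = graph \<beta> O (graph \<alpha> ^^ n) \<and> dual_order_automorphism \<gamma>) \<and>
      (graph \<alpha> ^^ n) O graph \<beta> \<subseteq> E \<and>
      graph \<beta> O (graph \<alpha> ^^ n) \<subseteq> E \<and>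
      (\<exists>\<gamma>. graph \<gamma> = (graph \<alpha> ^^ n) O graph \<beta> \<and> self_inverse \<gamma>) \<and>
      (\<exists>\<gamma>. graph \<gamma> = graph \<beta> O (graph \<alpha> ^^ n) \<and> self_inverse \<gamma>) \<and>
      graph \<alpha> O ((graph \<alpha> ^^ n) O graph \<beta>) O graph \<alpha> = (graph \<alpha> ^^ n) O graph \<beta> \<and>
      graph \<alpha> O (graph \<beta> O (graph \<alpha> ^^ n)) O graph \<alpha> = graph \<beta> O (graph \<alpha> ^^ n)"
    unfolding g1 g2 using d1 s1 e1 e2 i1 i2
    apply (intro conjI)
    apply blast+
    apply (simp_all only: graph_comp graph_eq)
    apply (simp_all add: fun_eq_iff)
    done
qed

end
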